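(* Let $T$ be a forest without isolated vertices of order at least $3$, and let $P_T$ be the set of pendant vertices of $T$ that are adjacent to a vertex of degree at least $2$. Then there is a $\delta$-sequence $\{\mathcal T_i\}_{i=1}^s$ of $T$ such that $\tilde z_i(T)\ge 0$ for all $2\le i\le s$ and $\tilde z_s(T)\ge |P_T|-|N_T(P_T)|$.
   Context: $N_T(S)$ denotes the set of all neighbours of vertices of $S$ in $T$; a pendant vertex is a vertex of degree 1. $G+H$ denotes disjoint union, $mK_1$ the edgeless graph on $m$ vertices, $K_r$ the complete graph. $\delta$-sequence: Let $G$ have order $p$ with $1\le\delta(G)\le p-2$. Set $\mathcal G_1=G_1=G$, $m_1=0$. For each $i$, write $\mathcal G_i=m_iK_1+G_i$, where $m_i\ge0$ is the number of isolated vertices of $\mathcal G_i$ and $G_i$ has no isolated vertices; put $\delta_i=\delta(G_i)$. If $\mathcal G_i$ is neither of the form $mK_1$ ($m\ge1$) nor $mK_1+K_r$ ($m\ge0$, $r\ge2$), choose a vertex $u_i$ of $G_i$ with $\deg_{G_i}(u_i)=\delta_i$ and let $\mathcal G_{i+1}$ be obtained from $G_i$ by deleting $u_i$ together with all its neighbours in $G_i$. Stop at the first index $s$ ($s\ge2$) for which $\mathcal G_s$ is $m_sK_1$ with $m_s\ge1$ (then set $\delta_s=0$) or $m_sK_1+K_r$ with $m_s\ge0$, $r\ge2$ (then $\delta_s=r-1$). The resulting $\{\mathcal G_i\}_{i=1}^s$ is a $\delta$-sequence of $G$. Define $\tilde y_j(G)=m_j+1-\delta_j$ for $1\le j\le s$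 and $\tilde z_i(G)=\sum_{j=2}^i\tilde y_j(G)$. *)

theory Defs
  imports Main
begin

text \<open>Subgraphs occurring in a delta-sequence
are induced subgraphs, represented by their vertex sets S.\<close>

definition simple_graph :: "'a set \<Rightarrow> ('a \<Rightarrow> 'a \<Rightarrow> bool) \<Rightarrow> bool" where
  "simple_graph V E \<longleftrightarrow> finite V \<and> (\<forall>v w. E v w \<longrightarrow> E w v) \<and> (\<forall>v. \<not> E v v)
     \<and> (\<forall>v w. E v w \<longrightarrow> v \<in> V \<and> w \<in> V)"

definition is_cycle :: "'a set \<Rightarrow> ('a \<Rightarrow> 'a \<Rightarrow> bool) \<Rightarrow> 'a list \<Rightarrow> bool" where
  "is_cycle V E cs \<longleftrightarrow> length cs \<ge> 3 \<and> distinct cs \<and> set cs \<subseteq> V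
     \<and> (\<forall>i. Suc i < length cs \<longrightarrow> E (cs ! i) (cs ! Suc i)) \<and> E (last cs) (hd cs)"

definition forest :: "'a set \<Rightarrow> ('a \<Rightarrow> 'a \<Rightarrow> bool) \<Rightarrow> bool" where
  "forest V E \<longleftrightarrow> simple_graph V E \<and> (\<nexists>cs. is_cycle V E cs)"

definition deg :: "('a \<Rightarrow> 'a \<Rightarrow> bool) \<Rightarrow> 'a set \<Rightarrow> 'a \<Rightarrow> nat" where
  "deg E S v = card {w \<in> S. E v w}"

definition nbhd :: "'a set \<Rightarrow> ('a \<Rightarrow> 'a \<Rightarrow> bool) \<Rightarrow> 'a set \<Rightarrow> 'a set" where
  "nbhd V E S = {w \<in> V. \<exists>v \<in> S. E v w}"

definition P_set :: "'a set \<Rightarrow> ('a \<Rightarrow> 'a \<Rightarrow> bool) \<Rightarrow> 'a set" where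
  "P_set V E = {v \<in> V. deg E V v = 1 \<and> (\<exists>w \<in> V. E v w \<and> deg E V w \<ge> 2)}"

text \<open>For the induced subgraph on S (= calligraphic G_i): its isolated vertices,
their number m_i, the part G_i without isolated vertices, and delta_i.\<close>
definition isol :: "('a \<Rightarrow> 'a \<Rightarrow> bool) \<Rightarrow> 'a set \<Rightarrow> 'a set" where
  "isol E S = {v \<in> S. deg E S v = 0}"

definition mnum :: "('a \<Rightarrow> 'a \<Rightarrow> bool) \<Rightarrow> 'a set \<Rightarrow> nat" where
  "mnum E S = card (isol E S)"

definition core :: "('a \<Rightarrow> 'a \<Rightarrow> bool) \<Rightarrow> 'a set \<Rightarrow> 'a set" where
  "core E S = S - isol E S"

text \<open>delta_i = delta(G_i); for terminal graphs this equals 0 (for m K_1) resp. r-1 (for m K_1 + K_r).\<close>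
definition dlt :: "('a \<Rightarrow> 'a \<Rightarrow> bool) \<Rightarrow> 'a set \<Rightarrow> nat" where
  "dlt E S = (if core E S = {} then 0 else Min (deg E (core E S) ` core E S))"

text \<open>Terminal forms: m K_1 with m \<ge> 1, or m K_1 + K_r with r \<ge> 2.\<close>
definition terminal :: "('a \<Rightarrow> 'a \<Rightarrow> bool) \<Rightarrow> 'a set \<Rightarrow> bool" where
  "terminal E S \<longleftrightarrow> (S \<noteq> {} \<and> core E S = {})
     \<or> (card (core E S) \<ge> 2 \<and> (\<forall>v \<in> core E S. \<forall>w \<in> core E S. v \<noteq> w \<longrightarrow> E v w))"

definition dstep :: "('a \<Rightarrow> 'a \<Rightarrow> bool) \<Rightarrow> 'a set \<Rightarrow> 'a set \<Rightarrow> bool" where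
  "dstep E S S' \<longleftrightarrow> (\<exists>u \<in> core E S. deg E (core E S) u = dlt E S
       \<and> S' = core E S - ({u} \<union> {w \<in> core E S. E u w}))"

text \<open>A delta-sequence [calG_1, ..., calG_s] (list index k corresponds to i = k+1).\<close>
definition delta_seq :: "'a set \<Rightarrow> ('a \<Rightarrow> 'a \<Rightarrow> bool) \<Rightarrow> 'a set list \<Rightarrow> bool" where
  "delta_seq V E Ss \<longleftrightarrow>
     1 \<le> dlt E V \<and> dlt E V + 2 \<le> card V \<and>
     length Ss \<ge> 2 \<and> Ss ! 0 = V \<and>
     (\<forall>k. Suc k < length Ss \<longrightarrow> \<not> terminal E (Ss ! k) \<and> dstep E (Ss ! k) (Ss ! Suc k)) \<and>
     terminal E (last Ss)"

definition ytil :: "('a \<Rightarrow> 'a \<Rightarrow> bool) \<Rightarrow> 'a set list \<Rightarrow> nat \<Rightarrow> int" where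
  "ytil E Ss j = int (mnum E (Ss ! (j - 1))) + 1 - int (dlt E (Ss ! (j - 1)))"

definition ztil :: "('a \<Rightarrow> 'a \<Rightarrow> bool) \<Rightarrow> 'a set list \<Rightarrow> nat \<Rightarrow> int" where
  "ztil E Ss i = (\<Sum>j = 2..i. ytil E Ss j)"

end

theory Submission
  imports Defs
begin

definition chain :: "('a \<Rightarrow> 'a \<Rightarrow> bool) \<Rightarrow> 'a list \<Rightarrow> bool" where
  "chain E p \<longleftrightarrow> (\<forall>i. Suc i < length p \<longrightarrow> E (p ! i) (p ! Suc i))"

lemma leaf_exists:
  assumes sg: "simple_graph V E" and nc: "\<nexists>cs. is_cycle V E cs"
    and XV: "X \<subseteq> V" and Xne: "X \<noteq> {}"
  shows "\<exists>v\<in>X. deg E X v \<le> 1"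
proof (rule ccontr)
  assume "\<not> ?thesis"
  hence d2: "\<forall>v\<in>X. deg E X v \<ge> 2" by auto
  have finX: "finite X" using sg XV unfolding simple_graph_def using finite_subset by blast
  have irr: "\<And>v. \<not> E v v" using sg unfolding simple_graph_def by blast
  define Ps where "Ps = {p. p \<noteq> [] \<and> distinct p \<and> set p \<subseteq> X \<and> chain E p}"
  obtain x0 where "x0 \<in> X" using Xne by blast
  hence "[x0] \<in> Ps" unfolding Ps_def chain_def by auto
  moreover have "\<forall>p. p \<in> Ps \<longrightarrow> length p < Suc (card X)"
  proof (intro allI impI)
    fix p assume "p \<in> Ps"
    hence "length p = card (set p)" "card (set p) \<le> card X"
      unfolding Ps_def using distinct_card[of p] card_mono[OF finX, of "set p"] by auto
    thus "length p < Suc (card X)" by simp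
  qed
  ultimately obtain p where pP: "p \<in> Ps" and pmax: "\<forall>q. q \<in> Ps \<longrightarrow> length q \<le> length p"
    using ex_has_greatest_nat[of "\<lambda>p. p \<in> Ps" "[x0]" length "Suc (card X)"] by blast
  have pne: "p \<noteq> []" and pd: "distinct p" and pX: "set p \<subseteq> X" and pc: "chain E p"
    using pP unfolding Ps_def by auto
  define v where "v = last p"
  have vX: "v \<in> X" using pne pX unfolding v_def by auto
  define N where "N = {x\<in>X. E v x}"
  have "card N \<ge> 2" using d2 vX unfolding N_def deg_def by auto
  define z where "z = p ! (length p - 2)"
  have "card (N - {z}) \<ge> 1"
  proof -
    have "finite N" using finX unfolding N_def by simp
    hence "card N \<le> card (N - {z}) + 1" by (simp add: card_Diff_singleton_if) arith
    thus ?thesis using \<open>card N \<ge> 2\<close> by simp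
  qed
  then obtain y where yN: "y \<in> N" and yz: "y \<noteq> z"
    by (metis Diff_iff card.empty ex_in_conv insertCI not_one_le_zero)
  have yX: "y \<in> X" and vy: "E v y" using yN unfolding N_def by auto
  show False
  proof (cases "y \<in> set p")
    case False
    have "p @ [y] \<in> Ps"
      unfolding Ps_def chain_def
    proof (intro CollectI conjI allI impI)
      show "p @ [y] \<noteq> []" by simp
      show "distinct (p @ [y])" using pd False by simp
      show "set (p @ [y]) \<subseteq> X" using pX yX by simp
      fix i assume "Suc i < length (p @ [y])"
      hence "Suc i < length p \<or> Suc i = length p" by auto
      thus "E ((p @ [y]) ! i) ((p @ [y]) ! Suc i)"
      proof
        assume a: "Suc i < length p"
        thus ?thesis using pc unfolding chain_def by (simp add: nth_append)
      next
        assume a: "Suc i = length p"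
        hence "p ! i = v" unfolding v_def using pne by (simp add: last_conv_nth del: One_nat_def) (metis diff_Suc_1)
        thus ?thesis using a vy by (simp add: nth_append)
      qed
    qed
    thus False using pmax by fastforce
  next
    case True
    then obtain i where il: "i < length p" and pi: "p ! i = y" by (metis in_set_conv_nth)
    have "i \<noteq> length p - 1"
      using pi irr vy pne unfolding v_def by (metis last_conv_nth)
    moreover have "i \<noteq> length p - 2" using pi yz unfolding z_def by auto
    ultimately have i3: "i + 3 \<le> length p" using il by linarith
    define cs where "cs = drop i p"
    have "is_cycle V E cs"
      unfolding is_cycle_def
    proof (intro conjI allI impI)
      show "3 \<le> length cs" using i3 unfolding cs_def by simp
      show "distinct cs" using pd unfolding cs_def by simp
      show "set cs \<subseteq> V" using pX XV set_drop_subset[of i p] unfolding cs_def by blast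
      fix j assume "Suc j < length cs"
      thus "E (cs ! j) (cs ! Suc j)" using pc unfolding cs_def chain_def by simp
    next
      have "last cs = v" unfolding cs_def v_def using il by simp
      moreover have "hd cs = y" unfolding cs_def using il pi by (simp add: hd_drop_conv_nth)
      ultimately show "E (last cs) (hd cs)" using vy by simp
    qed
    thus False using nc by blast
  qed
qed


definition excess :: "('a \<Rightarrow> 'a \<Rightarrow> bool) \<Rightarrow> 'a set \<Rightarrow> int" where
  "excess E X = int (card (P_set X E)) - int (card (nbhd X E (P_set X E)))"

context
  fixes V :: "'a set" and E :: "'a \<Rightarrow> 'a \<Rightarrow> bool"
  assumes sg: "simple_graph V E"
begin

lemma finV: "finite V" using sg unfolding simple_graph_def by blast
lemma finS: "S \<subseteq> V \<Longrightarrow> finite S" using finV finite_subset by blast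
lemma symE: "E v w \<Longrightarrow> E w v" using sg unfolding simple_graph_def by blast
lemma irrE: "\<not> E v v" using sg unfolding simple_graph_def by blast

lemma core_iff: "v \<in> core E S \<longleftrightarrow> v \<in> S \<and> deg E S v \<noteq> 0"
  unfolding core_def isol_def by auto

lemma core_sub: "core E S \<subseteq> S" unfolding core_def by auto

lemma deg_pos: "S \<subseteq> V \<Longrightarrow> y \<in> S \<Longrightarrow> E x y \<Longrightarrow> deg E S x \<noteq> 0"
proof -
  assume a: "S \<subseteq> V" "y \<in> S" "E x y"
  have "finite {w\<in>S. E x w}" using finS[OF a(1)] by simp
  moreover have "y \<in> {w\<in>S. E x w}" using a by simp
  ultimately have "card {w\<in>S. E x w} > 0" by (subst card_gt_0_iff) blast
  thus ?thesis unfolding deg_def by simp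
qed

lemma deg_core: assumes "S \<subseteq> V" "v \<in> S" shows "deg E (core E S) v = deg E S v"
proof -
  have "{x \<in> core E S. E v x} = {x \<in> S. E v x}"
    using core_iff deg_pos[OF assms(1) assms(2)] symE by blast
  thus ?thesis unfolding deg_def by simp
qed

lemma deg_mono: "A \<subseteq> B \<Longrightarrow> B \<subseteq> V \<Longrightarrow> deg E A v \<le> deg E B v"
  unfolding deg_def by (rule card_mono) (auto intro: finS)

lemma deg1_unique: "X \<subseteq> V \<Longrightarrow> deg E X x = 1 \<Longrightarrow> y \<in> X \<Longrightarrow> E x y \<Longrightarrow> z \<in> X \<Longrightarrow> E x z \<Longrightarrow> y = z"
proof -
  assume a: "X \<subseteq> V" "deg E X x = 1" "y \<in> X" "E x y" "z \<in> X" "E x z"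
  have "card {w\<in>X. E x w} = Suc 0" using a(2) unfolding deg_def by simp
  hence "\<exists>q. {w\<in>X. E x w} = {q}" by (simp only: card_1_singleton_iff)
  then obtain q where q: "{w\<in>X. E x w} = {q}" by (elim exE)
  have "y \<in> {w\<in>X. E x w}" "z \<in> {w\<in>X. E x w}" using a by simp_all
  hence "y \<in> {q}" "z \<in> {q}" unfolding q .
  thus "y = z" by simp
qed

lemma deg_le1_unique: "X \<subseteq> V \<Longrightarrow> deg E X x \<le> 1 \<Longrightarrow> y \<in> X \<Longrightarrow> E x y \<Longrightarrow> z \<in> X \<Longrightarrow> E x z \<Longrightarrow> y = z"
proof -
  assume a: "X \<subseteq> V" "deg E X x \<le> 1" "y \<in> X" "E x y" "z \<in> X" "E x z"
  have f: "finite {w\<in>X. E x w}" using finS[OF a(1)] by simp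
  have "card {w\<in>X. E x w} \<le> Suc 0" using a(2) unfolding deg_def by simp
  hence "\<forall>a1\<in>{w\<in>X. E x w}. \<forall>a2\<in>{w\<in>X. E x w}. a1 = a2" using card_le_Suc0_iff_eq[OF f] by blast
  thus "y = z" using a by blast
qed

lemma core_deg_pos: "S \<subseteq> V \<Longrightarrow> v \<in> core E S \<Longrightarrow> deg E (core E S) v \<ge> 1"
proof -
  assume a: "S \<subseteq> V" "v \<in> core E S"
  hence "v \<in> S" "deg E S v \<noteq> 0" using core_iff by auto
  thus ?thesis using deg_core[OF a(1)] by simp
qed

lemma dlt_le1: assumes nc: "\<nexists>cs. is_cycle V E cs" and SV: "S \<subseteq> V" shows "dlt E S \<le> 1"
proof (cases "core E S = {}")
  case True thus ?thesis unfolding dlt_def by simp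
next
  case False
  have cV: "core E S \<subseteq> V" using SV core_sub by blast
  obtain v where "v \<in> core E S" "deg E (core E S) v \<le> 1"
    using leaf_exists[OF sg nc cV False] by blast
  moreover have "finite (core E S)" using finS cV by blast
  ultimately have "Min (deg E (core E S) ` core E S) \<le> deg E (core E S) v"
    by (intro Min_le) auto
  thus ?thesis unfolding dlt_def using False \<open>deg E (core E S) v \<le> 1\<close> by simp
qed

lemma dlt_ge1: assumes SV: "S \<subseteq> V" and ne: "core E S \<noteq> {}" shows "dlt E S \<ge> 1"
proof -
  have "finite (core E S)" using finS SV core_sub by (meson finite_subset)
  thus ?thesis unfolding dlt_def using ne core_deg_pos[OF SV] by (simp add: Min_ge_iff)
qed

lemma nbhd_UN: "nbhd X E A = (\<Union>x\<in>A. {z\<in>X. E x z})" unfolding nbhd_def by auto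

lemma nbhd_Un: "nbhd X E (A \<union> B) = nbhd X E A \<union> nbhd X E B" unfolding nbhd_def by auto

lemma nbhd_card_le: assumes "finite A" "\<forall>x\<in>A. deg E X x \<le> 1"
  shows "card (nbhd X E A) \<le> card A"
proof -
  have "card (nbhd X E A) \<le> (\<Sum>x\<in>A. card {z\<in>X. E x z})"
    unfolding nbhd_UN by (rule card_UN_le[OF assms(1)])
  also have "\<dots> \<le> (\<Sum>x\<in>A. 1)" apply (rule sum_mono) using assms(2) unfolding deg_def by auto
  finally show ?thesis by simp
qed

lemma EX: assumes "finite A" "A0 \<subseteq> A" "\<forall>x\<in>A. deg E X x \<le> 1"
  shows "int (card A0) - int (card (nbhd X E A0)) \<le> int (card A) - int (card (nbhd X E A))"
proof -
  have A: "A = A0 \<union> (A - A0)" using assms(2) by blast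
  have "card (nbhd X E A) \<le> card (nbhd X E A0) + card (nbhd X E (A - A0))"
    by (subst A, subst nbhd_Un, rule card_Un_le)
  moreover have "card (nbhd X E (A - A0)) \<le> card (A - A0)"
    using nbhd_card_le assms by auto
  moreover have "card A = card A0 + card (A - A0)"
    using assms(1,2) by (metis card_Diff_subset card_mono diff_add_inverse le_add_diff_inverse finite_subset)
  ultimately show ?thesis by linarith
qed


lemma key:
  assumes SV: "S \<subseteq> V" and uC: "u \<in> core E S" and Nu: "{x\<in>core E S. E u x} = {w}"
  shows "excess E (core E S) \<le> int (mnum E (core E S - {u, w})) + excess E (core E (core E S - {u, w}))"
proof -
  define C where "C = core E S"
  define S' where "S' = C - {u, w}"
  define P where "P = P_set C E"
  define C' where "C' = core E S'"
  define P' where "P' = P_set C' E"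
  define L where "L = {x\<in>C. deg E C x = 1 \<and> E x w}"
  define Q where "Q = P - L"
  define B where "B = Q - P'"
  have CV: "C \<subseteq> V" using SV core_sub unfolding C_def by blast
  have finC: "finite C" using finS CV by blast
  have wC: "w \<in> C" and Euw: "E u w" using Nu unfolding C_def by auto
  have uCC: "u \<in> C" using uC C_def by simp
  have wu: "w \<noteq> u" using Euw irrE by metis
  have degu: "deg E C u = 1" unfolding deg_def using Nu C_def by simp
  have uL: "u \<in> L" unfolding L_def using uCC degu Euw by simp
  have S'V: "S' \<subseteq> V" and S'C: "S' \<subseteq> C" using CV unfolding S'_def by auto
  have C'S': "C' \<subseteq> S'" unfolding C'_def by (rule core_sub)
  have C'V: "C' \<subseteq> V" using C'S' S'V by blast
  have PC: "P \<subseteq> C" unfolding P_def P_set_def by auto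
  have finP: "finite P" using finC PC finite_subset by blast
  have P'C': "P' \<subseteq> C'" unfolding P'_def P_set_def by auto
  have finP': "finite P'" using finS[OF C'V] P'C' finite_subset by blast
  have "L - {u} \<subseteq> isol E S'"
  proof
    fix x assume x: "x \<in> L - {u}"
    hence xC: "x \<in> C" and dx: "deg E C x = 1" and xw: "E x w" unfolding L_def by auto
    have "x \<noteq> w" using xw irrE by metis
    hence xS': "x \<in> S'" using x xC unfolding S'_def by auto
    have "{y \<in> S'. E x y} = {}"
    proof (rule ccontr)
      assume "{y \<in> S'. E x y} \<noteq> {}"
      then obtain y where "y \<in> S'" "E x y" by blast
      hence "y = w" using deg1_unique[OF CV dx _ _ wC xw] S'C by blast
      thus False using \<open>y \<in> S'\<close> unfolding S'_def by simp
    qed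
    hence "deg E S' x = 0" unfolding deg_def by (metis card.empty)
    thus "x \<in> isol E S'" unfolding isol_def using xS' by simp
  qed
  moreover have "finite (isol E S')" unfolding isol_def using finS[OF S'V] by simp
  ultimately have "card (L - {u}) \<le> mnum E S'" unfolding mnum_def by (rule card_mono[rotated])
  moreover have finL: "finite L" using finC unfolding L_def by simp
  ultimately have hm: "int (card L) - 1 \<le> int (mnum E S')" using uL by (simp add: card_Diff_singleton)
  have Qf: "x \<in> S' \<and> w' \<in> S' \<and> deg E C w' \<ge> 2 \<and> deg E C x = 1"
    if xQ: "x \<in> Q" and xw': "E x w'" and w'C: "w' \<in> C" for x w'
  proof -
    from xQ have xP: "x \<in> P" and xL: "x \<notin> L" unfolding Q_def by auto
    from xP obtain w2 where xC: "x \<in> C" and dx: "deg E C x = 1" and w2C: "w2 \<in> C" and xw2: "E x w2"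
      and dw2: "deg E C w2 \<ge> 2" unfolding P_def P_set_def by auto
    have w2: "w2 = w'" using deg1_unique[OF CV dx w2C xw2 w'C xw'] .
    have nxw: "\<not> E x w" using xL xC dx unfolding L_def by auto
    hence "w' \<noteq> w" using xw' by auto
    moreover have "w' \<noteq> u" using dw2 w2 degu by auto
    moreover have "x \<noteq> u" using xL uL by auto
    moreover have "x \<noteq> w"
    proof
      assume "x = w"
      hence "E x u" using symE Euw by simp
      hence "u = w'" using deg1_unique[OF CV dx uCC _ w'C xw'] by simp
      thus False using \<open>w' \<noteq> u\<close> by simp
    qed
    ultimately show ?thesis using xC w'C dw2 w2 dx unfolding S'_def by auto
  qed
  have hb: "excess E C \<le> int (card Q) - int (card (nbhd C E Q)) + int (card L) - 1"
  proof (cases "P \<inter> L = {}")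
    case True
    hence "Q = P" unfolding Q_def by blast
    moreover have "card L \<ge> 1" using uL finL by (metis One_nat_def card_0_eq empty_iff not_less_eq_eq zero_order(2) le_zero_eq not_one_le_zero)
    ultimately show ?thesis unfolding excess_def P_def by simp
  next
    case False
    then obtain x where xP: "x \<in> P" and xL: "x \<in> L" by blast
    from xP obtain w2 where xC: "x \<in> C" and dx: "deg E C x = 1" and w2C: "w2 \<in> C" and xw2: "E x w2"
      and dw2: "deg E C w2 \<ge> 2" unfolding P_def P_set_def by auto
    have "w2 = w" using deg1_unique[OF CV dx w2C xw2 wC] xL unfolding L_def by auto
    hence dw: "deg E C w \<ge> 2" using dw2 by simp
    have LP: "L \<subseteq> P" unfolding L_def P_def P_set_def using wC dw by auto
    have NL: "nbhd C E L = {w}"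
    proof
      show "nbhd C E L \<subseteq> {w}" unfolding nbhd_def L_def using deg1_unique[OF CV _ _ _ wC] by blast
      show "{w} \<subseteq> nbhd C E L" unfolding nbhd_def using wC uL Euw by auto
    qed
    have PQL: "P = Q \<union> L" using LP unfolding Q_def by blast
    have wQ: "w \<notin> nbhd C E Q"
    proof
      assume "w \<in> nbhd C E Q"
      then obtain y where "y \<in> Q" "E y w" unfolding nbhd_def by auto
      thus False unfolding Q_def L_def P_def P_set_def by auto
    qed
    have finQ: "finite Q" using finP unfolding Q_def by simp
    have "card P = card Q + card L" unfolding PQL
      by (rule card_Un_disjoint[OF finQ finL]) (auto simp: Q_def)
    moreover have "card (nbhd C E P) = card (nbhd C E Q) + 1"
    proof -
      have "nbhd C E P = insert w (nbhd C E Q)" unfolding PQL nbhd_Un NL by auto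
      moreover have "finite (nbhd C E Q)" unfolding nbhd_def using finC by simp
      ultimately show ?thesis using wQ by simp
    qed
    ultimately show ?thesis unfolding excess_def P_def[symmetric] by simp
  qed
  have F: "x2 = x" if xB: "x \<in> B" and x2Q: "x2 \<in> Q" and w'C: "w' \<in> C" and xw': "E x w'" and x2w': "E x2 w'"
    for x x2 w'
  proof -
    have xQ: "x \<in> Q" and xP': "x \<notin> P'" using xB unfolding B_def by auto
    from Qf[OF xQ xw' w'C] have xS': "x \<in> S'" and w'S': "w' \<in> S'" and dx: "deg E C x = 1" by auto
    from Qf[OF x2Q x2w' w'C] have x2S': "x2 \<in> S'" by auto
    have dxS: "deg E S' x \<noteq> 0" using deg_pos[OF S'V w'S' xw'] .
    have xC': "x \<in> C'" unfolding C'_def using core_iff xS' dxS by blast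
    have dw'S: "deg E S' w' \<noteq> 0" using deg_pos[OF S'V xS' symE[OF xw']] .
    have w'C': "w' \<in> C'" unfolding C'_def using core_iff w'S' dw'S by blast
    have "deg E C' x \<le> 1" using deg_mono[OF _ CV, of C' x] C'S' S'C dx by auto
    moreover have "deg E C' x \<ge> 1" using core_deg_pos[OF S'V] xC' unfolding C'_def by blast
    ultimately have "deg E C' x = 1" by simp
    hence "\<not> deg E C' w' \<ge> 2" using xP' xC' w'C' xw' unfolding P'_def P_set_def by auto
    hence "deg E S' w' \<le> 1" using deg_core[OF S'V w'S'] unfolding C'_def by simp
    thus ?thesis using deg_le1_unique[OF S'V _ xS' symE[OF xw'] x2S' symE[OF x2w']] by simp
  qed
  have finQ: "finite Q" using finP unfolding Q_def by simp
  have hc2: "int (card Q) - int (card (nbhd C E Q)) \<le> int (card (Q \<inter> P')) - int (card (nbhd C E (Q \<inter> P')))"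
  proof -
    have QU: "Q = (Q \<inter> P') \<union> B" unfolding B_def by blast
    have finB: "finite B" using finQ unfolding B_def by simp
    have "card Q = card (Q \<inter> P') + card B"
      by (subst QU, rule card_Un_disjoint) (use finQ finB in \<open>auto simp: B_def\<close>)
    moreover have "card (nbhd C E Q) = card (nbhd C E (Q \<inter> P')) + card (nbhd C E B)"
    proof -
      have "nbhd C E Q = nbhd C E (Q \<inter> P') \<union> nbhd C E B" by (subst QU, rule nbhd_Un)
      moreover have "nbhd C E (Q \<inter> P') \<inter> nbhd C E B = {}"
      proof (rule ccontr)
        assume "nbhd C E (Q \<inter> P') \<inter> nbhd C E B \<noteq> {}"
        then obtain z x2 x where "z \<in> C" "x2 \<in> Q \<inter> P'" "E x2 z" "x \<in> B" "E x z"
          unfolding nbhd_def by blast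
        hence "x2 = x" using F by blast
        thus False using \<open>x2 \<in> Q \<inter> P'\<close> \<open>x \<in> B\<close> unfolding B_def by blast
      qed
      ultimately show ?thesis using finC unfolding nbhd_def by (simp add: card_Un_disjoint)
    qed
    moreover have "card (nbhd C E B) = card B"
    proof -
      have "card (nbhd C E B) = (\<Sum>x\<in>B. card {z\<in>C. E x z})"
        unfolding nbhd_UN
      proof (rule card_UN_disjoint[OF finB])
        show "\<forall>i\<in>B. finite {z \<in> C. E i z}" using finC by simp
        show "\<forall>i\<in>B. \<forall>j\<in>B. i \<noteq> j \<longrightarrow> {z \<in> C. E i z} \<inter> {z \<in> C. E j z} = {}"
          using F unfolding B_def by blast
      qed
      also have "\<dots> = (\<Sum>x\<in>B. 1)"
        apply (rule sum.cong, simp)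
        unfolding B_def Q_def P_def P_set_def deg_def by auto
      finally show ?thesis by simp
    qed
    ultimately show ?thesis by linarith
  qed
  have hc1: "int (card (Q \<inter> P')) - int (card (nbhd C E (Q \<inter> P'))) \<le> excess E C'"
  proof -
    have "nbhd C' E (Q \<inter> P') = nbhd C E (Q \<inter> P')"
    proof
      show "nbhd C' E (Q \<inter> P') \<subseteq> nbhd C E (Q \<inter> P')" unfolding nbhd_def using C'S' S'C by blast
      show "nbhd C E (Q \<inter> P') \<subseteq> nbhd C' E (Q \<inter> P')"
      proof
        fix z assume "z \<in> nbhd C E (Q \<inter> P')"
        then obtain x where zC: "z \<in> C" and xQ: "x \<in> Q \<inter> P'" and xz: "E x z" unfolding nbhd_def by auto
        from Qf[of x z] xQ xz zC have xS': "x \<in> S'" and zS': "z \<in> S'" by auto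
        have "z \<in> C'" unfolding C'_def using core_iff zS' deg_pos[OF S'V xS' symE[OF xz]] by blast
        thus "z \<in> nbhd C' E (Q \<inter> P')" unfolding nbhd_def using xQ xz by auto
      qed
    qed
    moreover have "int (card (Q \<inter> P')) - int (card (nbhd C' E (Q \<inter> P'))) \<le> excess E C'"
      unfolding excess_def P'_def[symmetric]
      by (rule EX[OF finP']) (auto simp: P'_def P_set_def)
    ultimately show ?thesis by simp
  qed
  show ?thesis using hb hc2 hc1 hm unfolding C_def[symmetric] S'_def[symmetric] C'_def[symmetric] by linarith
qed


lemma clique_P_empty:
  assumes CV: "C \<subseteq> V" and cl: "\<forall>v\<in>C. \<forall>w\<in>C. v \<noteq> w \<longrightarrow> E v w"
  shows "P_set C E = {}"
proof (rule ccontr)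
  assume "P_set C E \<noteq> {}"
  then obtain x w where xC: "x \<in> C" "deg E C x = 1" "w \<in> C" "deg E C w \<ge> 2"
    unfolding P_set_def by auto
  have dg: "deg E C v = card C - 1" if "v \<in> C" for v
  proof -
    have "{z \<in> C. E v z} = C - {v}" using cl that by (auto simp: irrE)
    thus ?thesis unfolding deg_def using that finS[OF CV] by simp
  qed
  show False using dg xC by fastforce
qed

definition yv :: "'a set \<Rightarrow> int" where
  "yv S = int (mnum E S) + 1 - int (dlt E S)"

lemma seq_exists:
  assumes nc: "\<nexists>cs. is_cycle V E cs"
  shows "S \<subseteq> V \<Longrightarrow> S \<noteq> {} \<Longrightarrow> \<exists>Ss. Ss \<noteq> [] \<and> Ss ! 0 = S
     \<and> (\<forall>k. Suc k < length Ss \<longrightarrow> \<not> terminal E (Ss ! k) \<and> dstep E (Ss ! k) (Ss ! Suc k))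
     \<and> terminal E (last Ss) \<and> (\<forall>k. 0 < k \<and> k < length Ss \<longrightarrow> yv (Ss ! k) \<ge> 0)
     \<and> (\<Sum>k\<in>{1..<length Ss}. yv (Ss ! k)) \<ge> excess E (core E S)"
proof (induction "card S" arbitrary: S rule: less_induct)
  case less
  note SV = less.prems(1) and Sne = less.prems(2)
  show ?case
  proof (cases "terminal E S")
    case True
    have "P_set (core E S) E = {}"
    proof (cases "core E S = {}")
      case True thus ?thesis unfolding P_set_def by simp
    next
      case False
      hence cl: "\<forall>v\<in>core E S. \<forall>w\<in>core E S. v \<noteq> w \<longrightarrow> E v w" using True by (simp add: terminal_def)
      have "core E S \<subseteq> V" using core_sub[of S] SV by (rule order_trans)
      thus ?thesis using cl by (rule clique_P_empty)
    qed
    hence "excess E (core E S) \<le> 0" unfolding excess_def by simp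
    thus ?thesis using True by (intro exI[of _ "[S]"]) simp
  next
    case nt: False
    define C where "C = core E S"
    have Cne: "C \<noteq> {}" using nt Sne unfolding terminal_def C_def by blast
    have CV: "C \<subseteq> V" using SV core_sub unfolding C_def by blast
    have finC: "finite C" using finS CV by blast
    have d1: "dlt E S = 1" using dlt_le1[OF nc SV] dlt_ge1[OF SV] Cne unfolding C_def by simp
    have "dlt E S \<in> deg E C ` C" unfolding dlt_def C_def[symmetric] using Cne finC by simp
    then obtain u where uC: "u \<in> C" and du: "deg E C u = dlt E S" by auto
    hence "card {x\<in>C. E u x} = Suc 0" using d1 unfolding deg_def by simp
    hence "\<exists>w. {x\<in>C. E u x} = {w}" by (simp only: card_1_singleton_iff)
    then obtain w where Nu: "{x\<in>C. E u x} = {w}" by (elim exE)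
    hence wC: "w \<in> C" and Euw: "E u w" by auto
    define S' where "S' = C - {u, w}"
    have ds: "dstep E S S'" unfolding dstep_def C_def[symmetric] S'_def
      using uC du Nu by (intro bexI[of _ u]) auto
    have S'ne: "S' \<noteq> {}"
    proof
      assume "S' = {}"
      hence Cuw: "C = {u, w}" using uC wC unfolding S'_def by blast
      have "u \<noteq> w" using Euw irrE by metis
      hence "card C = 2" using Cuw by simp
      moreover have "\<forall>v\<in>C. \<forall>v'\<in>C. v \<noteq> v' \<longrightarrow> E v v'" using Cuw Euw symE by auto
      ultimately show False using nt unfolding terminal_def C_def by auto
    qed
    have S'V: "S' \<subseteq> V" using CV unfolding S'_def by blast
    have "S' \<subset> S" using uC core_sub[of S] unfolding S'_def C_def by blast
    hence "card S' < card S" using finS[OF SV] psubset_card_mono by blast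
    from less.hyps[OF this S'V S'ne] obtain Ss' where
      h1: "Ss' \<noteq> []" and h2: "Ss' ! 0 = S'"
      and h3: "\<forall>k. Suc k < length Ss' \<longrightarrow> \<not> terminal E (Ss' ! k) \<and> dstep E (Ss' ! k) (Ss' ! Suc k)"
      and h4: "terminal E (last Ss')" and h5: "\<forall>k. 0 < k \<and> k < length Ss' \<longrightarrow> yv (Ss' ! k) \<ge> 0"
      and h6: "(\<Sum>k\<in>{1..<length Ss'}. yv (Ss' ! k)) \<ge> excess E (core E S')" by blast
    have yS': "yv S' \<ge> int (mnum E S')" using dlt_le1[OF nc S'V] unfolding yv_def by simp
    have kk: "excess E C \<le> int (mnum E S') + excess E (core E S')"
      using key[OF SV uC[unfolded C_def] Nu[unfolded C_def]] unfolding S'_def C_def .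
    define Ss where "Ss = S # Ss'"
    have "(\<Sum>k\<in>{1..<length Ss}. yv (Ss ! k)) = (\<Sum>k\<in>{0..<length Ss'}. yv (Ss' ! k))"
      unfolding Ss_def using sum.shift_bounds_Suc_ivl[of "\<lambda>k. yv ((S # Ss') ! k)" 0 "length Ss'"] by simp
    also have "\<dots> = yv (Ss' ! 0) + (\<Sum>k\<in>{1..<length Ss'}. yv (Ss' ! k))"
      using h1 by (simp add: sum.atLeast_Suc_lessThan)
    finally have sm0: "(\<Sum>k\<in>{1..<length Ss}. yv (Ss ! k)) = yv S' + (\<Sum>k\<in>{1..<length Ss'}. yv (Ss' ! k))"
      unfolding h2 .
    have sm: "(\<Sum>k\<in>{1..<length Ss}. yv (Ss ! k)) \<ge> excess E C"
      using sm0 h6 yS' kk by linarith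
    show ?thesis
    proof (intro exI[of _ Ss] conjI)
      show "Ss \<noteq> []" "Ss ! 0 = S" unfolding Ss_def by simp_all
      show "\<forall>k. Suc k < length Ss \<longrightarrow> \<not> terminal E (Ss ! k) \<and> dstep E (Ss ! k) (Ss ! Suc k)"
      proof (intro allI impI)
        fix k assume "Suc k < length Ss"
        thus "\<not> terminal E (Ss ! k) \<and> dstep E (Ss ! k) (Ss ! Suc k)"
          using nt ds h2 h3 unfolding Ss_def by (cases k) auto
      qed
      show "terminal E (last Ss)" using h1 h4 unfolding Ss_def by simp
      show "\<forall>k. 0 < k \<and> k < length Ss \<longrightarrow> yv (Ss ! k) \<ge> 0"
      proof (intro allI impI)
        fix k assume k: "0 < k \<and> k < length Ss"
        then obtain k' where kk': "k = Suc k'" by (cases k) auto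
        show "yv (Ss ! k) \<ge> 0"
        proof (cases k')
          case 0 thus ?thesis using kk' yS' h2 unfolding Ss_def by simp
        next
          case (Suc j) thus ?thesis using kk' k h5 unfolding Ss_def by simp
        qed
      qed
      show "(\<Sum>k\<in>{1..<length Ss}. yv (Ss ! k)) \<ge> excess E (core E S)" using sm unfolding C_def .
    qed
  qed
qed

end

lemma ztil_eq: "1 \<le> i \<Longrightarrow> ztil E Ss i = (\<Sum>k\<in>{1..<i}. int (mnum E (Ss ! k)) + 1 - int (dlt E (Ss ! k)))"
proof (induction i rule: dec_induct)
  case base thus ?case unfolding ztil_def by simp
next
  case (step n)
  have "ztil E Ss (Suc n) = ztil E Ss n + ytil E Ss (Suc n)"
    unfolding ztil_def using step.hyps by (simp add: sum.cl_ivl_Suc)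
  thus ?case using step by (simp add: ytil_def)
qed

lemma three: assumes "card (V::'a set) \<ge> 3"
  shows "\<exists>a b c. a \<in> V \<and> b \<in> V \<and> c \<in> V \<and> a \<noteq> b \<and> a \<noteq> c \<and> b \<noteq> c"
proof -
  have fin: "finite V" using assms by (metis card.infinite not_numeral_le_zero)
  have "V \<noteq> {}" using assms by auto
  then obtain a where a: "a \<in> V" by blast
  have "card (V - {a}) \<ge> 2" using fin a assms by (simp add: card_Diff_singleton)
  hence "V - {a} \<noteq> {}" by (metis card.empty not_numeral_le_zero)
  then obtain b where b: "b \<in> V - {a}" by blast
  have "card (V - {a} - {b}) \<ge> 1" using fin b \<open>card (V - {a}) \<ge> 2\<close> by (simp add: card_Diff_singleton)
  hence "V - {a} - {b} \<noteq> {}" by (metis card.empty not_one_le_zero)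
  then obtain c where c: "c \<in> V - {a} - {b}" by blast
  show ?thesis using a b c by blast
qed

theorem mainTheorem6:
  fixes V :: "'a set" and E :: "'a \<Rightarrow> 'a \<Rightarrow> bool"
  assumes "forest V E"
    and "\<forall>v \<in> V. deg E V v \<ge> 1"
    and "card V \<ge> 3"
  shows "\<exists>Ss. delta_seq V E Ss
           \<and> (\<forall>i \<in> {2..length Ss}. ztil E Ss i \<ge> 0)
           \<and> ztil E Ss (length Ss) \<ge> int (card (P_set V E)) - int (card (nbhd V E (P_set V E)))"
proof -
  have sg: "simple_graph V E" and nc: "\<nexists>cs. is_cycle V E cs" using assms(1) unfolding forest_def by auto
  have Vne: "V \<noteq> {}" using assms(3) by auto
  have cV: "core E V = V" using assms(2) unfolding core_def isol_def by auto
  obtain Ss where h1: "Ss \<noteq> []" and h2: "Ss ! 0 = V"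
      and h3: "\<forall>k. Suc k < length Ss \<longrightarrow> \<not> terminal E (Ss ! k) \<and> dstep E (Ss ! k) (Ss ! Suc k)"
      and h4: "terminal E (last Ss)" and h5: "\<forall>k. 0 < k \<and> k < length Ss \<longrightarrow> yv E (Ss ! k) \<ge> 0"
      and h6: "(\<Sum>k\<in>{1..<length Ss}. yv E (Ss ! k)) \<ge> excess E (core E V)"
    using seq_exists[OF sg nc, of V] Vne by blast
  have d1: "dlt E V = 1" using dlt_le1[OF sg nc, of V] dlt_ge1[OF sg, of V] cV Vne by simp
  have ntV: "\<not> terminal E V"
  proof
    assume "terminal E V"
    hence cl: "\<forall>v\<in>V. \<forall>w\<in>V. v \<noteq> w \<longrightarrow> E v w" using cV Vne unfolding terminal_def by auto
    obtain a b c where abc: "a \<in> V" "b \<in> V" "c \<in> V" "a \<noteq> b" "a \<noteq> c" "b \<noteq> c"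
      using three[OF assms(3)] by blast
    have "is_cycle V E [a, b, c]" unfolding is_cycle_def
    proof (intro conjI allI impI)
      fix i assume "Suc i < length [a, b, c]"
      hence "i = 0 \<or> i = 1" by auto
      thus "E ([a, b, c] ! i) ([a, b, c] ! Suc i)" using abc cl by auto
    qed (use abc cl in auto)
    thus False using nc by blast
  qed
  have len: "length Ss \<ge> 2"
  proof (rule ccontr)
    assume "\<not> length Ss \<ge> 2"
    hence "length Ss = 1" using h1 length_greater_0_conv[of Ss] by linarith
    hence "last Ss = V" using h2 h1 by (simp add: last_conv_nth)
    thus False using h4 ntV by simp
  qed
  have zeq: "ztil E Ss i = (\<Sum>k\<in>{1..<i}. yv E (Ss ! k))" if "1 \<le> i" for i
    using ztil_eq[OF that] unfolding yv_def[OF sg] by simp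
  show ?thesis
  proof (intro exI[of _ Ss] conjI ballI)
    show "delta_seq V E Ss" unfolding delta_seq_def using d1 assms(3) len h2 h3 h4 by simp
    fix i assume i: "i \<in> {2..length Ss}"
    have "(\<Sum>k\<in>{1..<i}. yv E (Ss ! k)) \<ge> 0" using h5 i by (intro sum_nonneg) auto
    thus "ztil E Ss i \<ge> 0" using zeq i by simp
  next
    show "ztil E Ss (length Ss) \<ge> int (card (P_set V E)) - int (card (nbhd V E (P_set V E)))"
    proof -
      have z: "ztil E Ss (length Ss) = (\<Sum>k\<in>{1..<length Ss}. yv E (Ss ! k))"
        using zeq len by simp
      show ?thesis using z h6 unfolding cV excess_def by linarith
    qed
  qed
qed

end
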